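(* Let $(H_X,H_Z)$ be a CSS code with CSS logical basis $(L_X,L_Z)$ such that every vector in $\mathrm{rs}(H_X)+\mathrm{rs}(L_X)$ and every vector in $\mathrm{rs}(H_Z)+\mathrm{rs}(L_Z)$ has even Hamming weight. Let $\mathcal L\subseteq[k]\setminus\{1\}$ and $u=\sum_{j\in\mathcal L}(L_X)_j$, where $(L_X)_j$ is row $j$. Then for every $z\in(L_Z)_1+\mathrm{rs}(H_Z)$: (i) for every $x\in u+\mathrm{rs}(H_X)$, the Pauli operator $(x|z)$ (representing $\overline Z_1\overline X_{\mathcal L}$) has even weight $|x\vee z|$; (ii) for every $x\in (L_X)_1+u+\mathrm{rs}(H_X)$, the Pauli operator $(x|z)$ (representing $\overline Y_1\overline X_{\mathcal L}$ up to phase) has odd weight $|x\vee z|$.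
   Context: Conventions: arithmetic over $\mathbb F_2$, row vectors, $\mathrm{rs}$ = row space, $\ker M=\{v:Mv^T=0\}$. A CSS code is given by $H_X,H_Z$ with $H_XH_Z^T=0$, $k=n-\operatorname{rank}H_X-\operatorname{rank}H_Z$; a CSS logical basis is $L_X,L_Z\in\mathbb F_2^{k\times n}$ with rows of $L_X$ in $\ker H_Z$, rows of $L_Z$ in $\ker H_X$, $L_XL_Z^T=I_k$. A pair $(x|z)\in\mathbb F_2^{2n}$ represents the Pauli operator $\prod_iX_i^{x_i}Z_i^{z_i}$ up to phase; its weight is $|x\vee z|=\#\{i:x_i=1\text{ or }z_i=1\}$. *)

theory Defs
  imports "HOL-Library.Z2" "HOL-Library.Function_Algebras"
begin

text \<open>Vectors over F2 are functions nat => bit (bit is the field F2 from HOL-Library.Z2);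
  a vector of F2^n is one supported in the coordinates 0..n-1. A matrix with m rows is a
  function from row indices to row vectors, rows indexed 1..m as in the paper.\<close>

definition f2vec :: "nat \<Rightarrow> (nat \<Rightarrow> bit) \<Rightarrow> bool" where
  "f2vec n v \<longleftrightarrow> (\<forall>i\<ge>n. v i = 0)"

definition f2mat :: "nat \<Rightarrow> nat \<Rightarrow> (nat \<Rightarrow> nat \<Rightarrow> bit) \<Rightarrow> bool" where
  "f2mat m n M \<longleftrightarrow> (\<forall>i\<in>{1..m}. f2vec n (M i))"

definition dotp :: "nat \<Rightarrow> (nat \<Rightarrow> bit) \<Rightarrow> (nat \<Rightarrow> bit) \<Rightarrow> bit" where
  "dotp n v w = (\<Sum>i<n. v i * w i)"

definition rs :: "nat \<Rightarrow> (nat \<Rightarrow> nat \<Rightarrow> bit) \<Rightarrow> (nat \<Rightarrow> bit) set" where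
  "rs m M = {(\<Sum>i\<in>S. M i) | S. S \<subseteq> {1..m}}"

definition f2ker :: "nat \<Rightarrow> nat \<Rightarrow> (nat \<Rightarrow> nat \<Rightarrow> bit) \<Rightarrow> (nat \<Rightarrow> bit) set" where
  "f2ker m n M = {v. f2vec n v \<and> (\<forall>i\<in>{1..m}. dotp n (M i) v = 0)}"

definition rows_indep :: "(nat \<Rightarrow> nat \<Rightarrow> bit) \<Rightarrow> nat set \<Rightarrow> bool" where
  "rows_indep M S \<longleftrightarrow> (\<forall>T\<subseteq>S. T \<noteq> {} \<longrightarrow> (\<Sum>i\<in>T. M i) \<noteq> 0)"

definition f2rank :: "nat \<Rightarrow> (nat \<Rightarrow> nat \<Rightarrow> bit) \<Rightarrow> nat" where
  "f2rank m M = Max {card S | S. S \<subseteq> {1..m} \<and> rows_indep M S}"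

definition sumset :: "(nat \<Rightarrow> bit) set \<Rightarrow> (nat \<Rightarrow> bit) set \<Rightarrow> (nat \<Rightarrow> bit) set" where
  "sumset A B = {a + b | a b. a \<in> A \<and> b \<in> B}"

definition hw :: "nat \<Rightarrow> (nat \<Rightarrow> bit) \<Rightarrow> nat" where
  "hw n v = card {i. i < n \<and> v i \<noteq> 0}"

definition pauli_wt :: "nat \<Rightarrow> (nat \<Rightarrow> bit) \<Rightarrow> (nat \<Rightarrow> bit) \<Rightarrow> nat" where
  "pauli_wt n x z = card {i. i < n \<and> (x i \<noteq> 0 \<or> z i \<noteq> 0)}"

definition css_code :: "nat \<Rightarrow> nat \<Rightarrow> nat \<Rightarrow> nat \<Rightarrow> (nat \<Rightarrow> nat \<Rightarrow> bit) \<Rightarrow> (nat \<Rightarrow> nat \<Rightarrow> bit) \<Rightarrow> bool" where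
  "css_code n k mx mz HX HZ \<longleftrightarrow> f2mat mx n HX \<and> f2mat mz n HZ \<and>
     (\<forall>i\<in>{1..mx}. \<forall>j\<in>{1..mz}. dotp n (HX i) (HZ j) = 0) \<and>
     int k = int n - int (f2rank mx HX) - int (f2rank mz HZ)"

definition css_logical_basis :: "nat \<Rightarrow> nat \<Rightarrow> nat \<Rightarrow> nat \<Rightarrow> (nat \<Rightarrow> nat \<Rightarrow> bit) \<Rightarrow> (nat \<Rightarrow> nat \<Rightarrow> bit)
     \<Rightarrow> (nat \<Rightarrow> nat \<Rightarrow> bit) \<Rightarrow> (nat \<Rightarrow> nat \<Rightarrow> bit) \<Rightarrow> bool" where
  "css_logical_basis n k mx mz HX HZ LX LZ \<longleftrightarrow>
     (\<forall>j\<in>{1..k}. LX j \<in> f2ker mz n HZ) \<and> (\<forall>j\<in>{1..k}. LZ j \<in> f2ker mx n HX) \<and>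
     (\<forall>i\<in>{1..k}. \<forall>j\<in>{1..k}. dotp n (LX i) (LZ j) = (if i = j then 1 else 0))"

end

theory Submission
  imports Defs
begin

lemma ofnat_bit: "(of_nat m :: bit) = (if even m then 0 else 1)"
  by (induction m) auto

lemma even_iff_bit: "even m \<longleftrightarrow> (of_nat m :: bit) = 0"
  by (simp add: ofnat_bit)

lemma card_bit: "(of_nat (card {i. i < (n::nat) \<and> P i}) :: bit) = (\<Sum>i<n. if P i then 1 else 0)"
proof (induction n)
  case 0 then show ?case by simp
next
  case (Suc n)
  have "{i. i < Suc n \<and> P i} = (if P n then insert n {i. i < n \<and> P i} else {i. i < n \<and> P i})"
    by (auto simp: less_Suc_eq)
  then show ?case using Suc by simp
qed

lemma sum_fun_apply: "(\<Sum>i\<in>S. (M i :: nat \<Rightarrow> bit)) x = (\<Sum>i\<in>S. M i x)"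
  by (induction S rule: infinite_finite_induct) auto

lemma pw_bit: "(of_nat (pauli_wt n x z) :: bit) = of_nat (hw n x) + of_nat (hw n z) + dotp n x z"
proof -
  have pt: "(if x i \<noteq> 0 \<or> z i \<noteq> 0 then 1 else 0) =
      (if x i \<noteq> 0 then 1 else 0) + (if z i \<noteq> 0 then 1 else 0) + x i * z i" for i
    by (cases "x i"; cases "z i") auto
  show ?thesis
    unfolding pauli_wt_def hw_def dotp_def card_bit
    by (simp only: sum.distrib[symmetric] pt)
qed

lemma dotp_add1: "dotp n (a + b) c = dotp n a c + dotp n b c"
  unfolding dotp_def by (simp only: plus_fun_apply distrib_right sum.distrib)

lemma dotp_add2: "dotp n c (a + b) = dotp n c a + dotp n c b"
  unfolding dotp_def by (simp only: plus_fun_apply distrib_left sum.distrib)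

lemma dotp_comm: "dotp n a b = dotp n b a"
  unfolding dotp_def by (intro sum.cong refl) (rule mult.commute)

lemma dotp_zero1: "dotp n 0 c = 0"
  unfolding dotp_def by (simp only: zero_fun_apply mult_zero_left sum.neutral_const)

lemma dotp_zero2: "dotp n c 0 = 0"
  unfolding dotp_def by (simp only: zero_fun_apply mult_zero_right sum.neutral_const)

lemma dotp_sum1: "dotp n (\<Sum>i\<in>S. M i) c = (\<Sum>i\<in>S. dotp n (M i) c)"
proof (induction S rule: infinite_finite_induct)
  case (infinite A) then show ?case by (simp only: sum.infinite[OF infinite] dotp_zero1)
next
  case empty then show ?case by (simp only: sum.empty dotp_zero1)
next
  case (insert x F) then show ?case by (simp only: sum.insert[OF insert(1,2)] dotp_add1 insert.IH)
qed

lemma dotp_sum2: "dotp n c (\<Sum>i\<in>S. M i) = (\<Sum>i\<in>S. dotp n c (M i))"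
proof (induction S rule: infinite_finite_induct)
  case (infinite A) then show ?case by (simp only: sum.infinite[OF infinite] dotp_zero2)
next
  case empty then show ?case by (simp only: sum.empty dotp_zero2)
next
  case (insert x F) then show ?case by (simp only: sum.insert[OF insert(1,2)] dotp_add2 insert.IH)
qed

theorem mainTheorem16:
  fixes n k mx mz :: nat and HX HZ LX LZ :: "nat \<Rightarrow> nat \<Rightarrow> bit" and \<L> :: "nat set"
  assumes code: "css_code n k mx mz HX HZ"
    and basis: "css_logical_basis n k mx mz HX HZ LX LZ"
    and k1: "1 \<le> k"
    and evenX: "\<forall>v\<in>sumset (rs mx HX) (rs k LX). even (hw n v)"
    and evenZ: "\<forall>v\<in>sumset (rs mz HZ) (rs k LZ). even (hw n v)"
    and L: "\<L> \<subseteq> {1..k} - {1}"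
  shows "\<forall>z\<in>sumset {LZ 1} (rs mz HZ).
           (\<forall>x\<in>sumset {\<Sum>j\<in>\<L>. LX j} (rs mx HX). even (pauli_wt n x z)) \<and>
           (\<forall>x\<in>sumset {LX 1 + (\<Sum>j\<in>\<L>. LX j)} (rs mx HX). odd (pauli_wt n x z))"
proof (rule ballI, rule conjI)
  fix z assume "z \<in> sumset {LZ 1} (rs mz HZ)"
  then obtain S' where S': "S' \<subseteq> {1..mz}" and z: "z = LZ 1 + (\<Sum>i\<in>S'. HZ i)"
    unfolding sumset_def rs_def by auto
  have finL: "finite \<L>" using L finite_subset by blast
  have orth: "HZ j \<in> f2ker mz n HZ \<or> True" for j by simp
  have cssorth: "\<forall>i\<in>{1..mx}. \<forall>j\<in>{1..mz}. dotp n (HX i) (HZ j) = 0"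
    using code unfolding css_code_def by blast
  have LXker: "\<forall>j\<in>{1..k}. \<forall>i\<in>{1..mz}. dotp n (HZ i) (LX j) = 0"
    using basis unfolding css_logical_basis_def f2ker_def by blast
  have LZker: "\<forall>i\<in>{1..mx}. dotp n (HX i) (LZ 1) = 0"
    using basis k1 unfolding css_logical_basis_def f2ker_def by auto
  have LXLZ: "\<forall>i\<in>{1..k}. \<forall>j\<in>{1..k}. dotp n (LX i) (LZ j) = (if i = j then 1 else 0)"
    using basis unfolding css_logical_basis_def by blast
  have zeven: "even (hw n z)"
  proof -
    have "z \<in> sumset (rs mz HZ) (rs k LZ)"
    proof -
      have "(\<Sum>i\<in>S'. HZ i) \<in> rs mz HZ" using S' unfolding rs_def by blast
      moreover have "LZ 1 \<in> rs k LZ" using k1 unfolding rs_def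
        by (intro CollectI exI[of _ "{1}"]) simp
      ultimately show ?thesis unfolding sumset_def z by (auto simp: add.commute)
    qed
    then show ?thesis using evenZ by blast
  qed
  have key: "of_nat (pauli_wt n x z) = (if 1 \<in> T then 1 else (0::bit))"
    if T: "T \<subseteq> {1..k}" "T - {1} = \<L>" and x: "x \<in> sumset {\<Sum>j\<in>T. LX j} (rs mx HX)" for x T
  proof -
    obtain S where S: "S \<subseteq> {1..mx}" and xe: "x = (\<Sum>j\<in>T. LX j) + (\<Sum>i\<in>S. HX i)"
      using x unfolding sumset_def rs_def by auto
    have finT: "finite T" using T finite_subset by blast
    have finS: "finite S" using S finite_subset by blast
    have finS': "finite S'" using S' finite_subset by blast
    have xeven: "even (hw n x)"
    proof -
      have "x \<in> sumset (rs mx HX) (rs k LX)"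
        unfolding sumset_def rs_def xe
        using S T by (auto simp: add.commute)
      then show ?thesis using evenX by blast
    qed
    have a: "dotp n (\<Sum>j\<in>T. LX j) (LZ 1) = (if 1 \<in> T then 1 else 0)"
    proof -
      have "dotp n (\<Sum>j\<in>T. LX j) (LZ 1) = (\<Sum>j\<in>T. if j = 1 then 1 else 0)"
        unfolding dotp_sum1 using T k1 LXLZ by (intro sum.cong) auto
      also have "\<dots> = (if 1 \<in> T then 1 else 0)" using finT by simp
      finally show ?thesis .
    qed
    have b: "dotp n (\<Sum>j\<in>T. LX j) (\<Sum>i\<in>S'. HZ i) = 0"
      unfolding dotp_sum1 dotp_sum2 using T S' LXker
      by (intro sum.neutral ballI) (auto simp: dotp_comm subset_iff)
    have c: "dotp n (\<Sum>i\<in>S. HX i) (LZ 1) = 0"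
      unfolding dotp_sum1 using S LZker by (intro sum.neutral ballI) auto
    have d: "dotp n (\<Sum>i\<in>S. HX i) (\<Sum>i\<in>S'. HZ i) = 0"
      unfolding dotp_sum1 dotp_sum2 using S S' cssorth
      by (intro sum.neutral ballI) (auto simp: subset_iff)
    have "dotp n x z = (if 1 \<in> T then 1 else 0)"
      unfolding xe z dotp_add1 dotp_add2 a b c d by simp
    then show ?thesis using pw_bit[of n x z] xeven zeven by (simp add: even_iff_bit)
  qed
  show "\<forall>x\<in>sumset {\<Sum>j\<in>\<L>. LX j} (rs mx HX). even (pauli_wt n x z)"
  proof
    fix x assume "x \<in> sumset {\<Sum>j\<in>\<L>. LX j} (rs mx HX)"
    moreover have "\<L> \<subseteq> {1..k}" "\<L> - {1} = \<L>" "1 \<notin> \<L>" using L by auto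
    ultimately show "even (pauli_wt n x z)" using key[of \<L> x]
      by (simp add: even_iff_bit)
  qed
  show "\<forall>x\<in>sumset {LX 1 + (\<Sum>j\<in>\<L>. LX j)} (rs mx HX). odd (pauli_wt n x z)"
  proof
    fix x assume x: "x \<in> sumset {LX 1 + (\<Sum>j\<in>\<L>. LX j)} (rs mx HX)"
    have "1 \<notin> \<L>" using L by auto
    then have "(\<Sum>j\<in>insert 1 \<L>. LX j) = LX 1 + (\<Sum>j\<in>\<L>. LX j)" using finL by simp
    with x have x': "x \<in> sumset {\<Sum>j\<in>insert 1 \<L>. LX j} (rs mx HX)" by simp
    have "insert 1 \<L> \<subseteq> {1..k}" "insert 1 \<L> - {1} = \<L>" using L k1 \<open>1 \<notin> \<L>\<close> by auto
    from key[OF this x'] show "odd (pauli_wt n x z)"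
      by (auto simp: even_iff_bit)
  qed
qed

end
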